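(* Let $(z,w)\mapsto(f(z),aw+g(z))=:(z',w')$, with $f,g$ holomorphic and $a\in\mathbb{R}\setminus\{0\}$, be a local rigid biholomorphism of $\mathbb{C}^2$ mapping the rigid hypersurface $\{u=F(z,\bar z)\}$ into the rigid hypersurface $\{u'=F'(z',\bar z')\}$. Then $$F_{zz\bar z\bar z}F_{z\bar z}-F_{zz\bar z}F_{z\bar z\bar z}\equiv\frac1{a^2}\big(f_z\bar f_{\bar z}\big)^3\Big[F'_{z'z'\bar z'\bar z'}F'_{z'\bar z'}-F'_{z'z'\bar z'}F'_{z'\bar z'\bar z'}\Big],$$ where the derivatives of $F'$ are evaluated at $(f(z),\overline{f(z)})$.
   Context: Coordinates on $\mathbb{C}^2$ are $(z,w)$, $w=u+iv$; $F,F'$ are real-valued real-analytic; $\bar f_{\bar z}=\overline{f_z}$. *)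

theory Defs
  imports "HOL-Analysis.Analysis"
begin

text \<open>Real-analytic real-valued functions of z = x + i y: locally an absolutely
convergent double power series in (x - x0, y - y0).\<close>
definition real_analytic_on :: "(complex \<Rightarrow> real) \<Rightarrow> complex set \<Rightarrow> bool" where
  "real_analytic_on F U \<longleftrightarrow>
     (\<forall>z0\<in>U. \<exists>r>0. \<exists>c :: nat \<Rightarrow> nat \<Rightarrow> real.
        \<forall>x y. \<bar>x\<bar> < r \<and> \<bar>y\<bar> < r \<longrightarrow>
          ((\<lambda>(j,k). c j k * x ^ j * y ^ k) has_sum F (z0 + Complex x y)) UNIV)"

definition dx :: "(complex \<Rightarrow> complex) \<Rightarrow> complex \<Rightarrow> complex" where
  "dx h z = frechet_derivative h (at z) 1"

definition dy :: "(complex \<Rightarrow> complex) \<Rightarrow> complex \<Rightarrow> complex" where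
  "dy h z = frechet_derivative h (at z) \<i>"

definition Dz :: "(complex \<Rightarrow> complex) \<Rightarrow> complex \<Rightarrow> complex" where
  "Dz h = (\<lambda>z. (dx h z - \<i> * dy h z) / 2)"

definition Dzb :: "(complex \<Rightarrow> complex) \<Rightarrow> complex \<Rightarrow> complex" where
  "Dzb h = (\<lambda>z. (dx h z + \<i> * dy h z) / 2)"

end

theory Submission
  imports Defs "HOL-Complex_Analysis.Complex_Analysis"
begin

definition W :: "(complex \<Rightarrow> complex) \<Rightarrow> complex \<Rightarrow> complex \<Rightarrow> complex \<Rightarrow> bool" where
  "W h z a b \<longleftrightarrow> (h has_derivative (\<lambda>v. a * v + b * cnj v)) (at z)"

lemma W_Dz:
  assumes "W h z a b" shows "Dz h z = a" "Dzb h z = b"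
proof -
  have "frechet_derivative h (at z) = (\<lambda>v. a * v + b * cnj v)"
    using assms unfolding W_def by (metis frechet_derivative_at)
  then show "Dz h z = a" "Dzb h z = b"
    unfolding Dz_def Dzb_def dx_def dy_def by (auto simp: field_simps)
qed

lemma diff_W:
  assumes "h differentiable (at z)" shows "W h z (Dz h z) (Dzb h z)"
proof -
  obtain D where D: "(h has_derivative D) (at z)" using assms differentiable_def by blast
  then have fd: "frechet_derivative h (at z) = D" by (metis frechet_derivative_at)
  have lin: "linear D" using D has_derivative_linear by blast
  have eq: "D v = Dz h z * v + Dzb h z * cnj v" for v
  proof -
    have "v = Re v *\<^sub>R 1 + Im v *\<^sub>R \<i>" by (simp add: complex_eq_iff)
    then have "D v = Re v *\<^sub>R D 1 + Im v *\<^sub>R D \<i>"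
      by (metis lin linear_add linear_scale)
    also have "\<dots> = Dz h z * v + Dzb h z * cnj v"
      unfolding Dz_def Dzb_def dx_def dy_def fd
      by (simp add: scaleR_conv_of_real field_simps complex_eq_iff algebra_simps)
    finally show ?thesis .
  qed
  show ?thesis unfolding W_def using D eq by (metis (no_types, lifting) ext)
qed

lemma W_eqI: "W h z a' b' \<Longrightarrow> a' = a \<Longrightarrow> b' = b \<Longrightarrow> W h z a b" by simp
lemma W_eqa: "W h z a' b \<Longrightarrow> a' = a \<Longrightarrow> W h z a b" by simp
lemma W_eqb: "W h z a b' \<Longrightarrow> b' = b \<Longrightarrow> W h z a b" by simp

lemma W_const: "W (\<lambda>x. c) z 0 0"
  unfolding W_def by simp

lemma W_add: "W h1 z a1 b1 \<Longrightarrow> W h2 z a2 b2 \<Longrightarrow> W (\<lambda>x. h1 x + h2 x) z (a1+a2) (b1+b2)"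
  unfolding W_def by (rule has_derivative_eq_rhs[OF has_derivative_add], assumption, assumption, auto simp: algebra_simps)

lemma W_diff: "W h1 z a1 b1 \<Longrightarrow> W h2 z a2 b2 \<Longrightarrow> W (\<lambda>x. h1 x - h2 x) z (a1-a2) (b1-b2)"
  unfolding W_def by (rule has_derivative_eq_rhs[OF has_derivative_diff], assumption, assumption, auto simp: algebra_simps)

lemma W_mult: "W h1 z a1 b1 \<Longrightarrow> W h2 z a2 b2 \<Longrightarrow>
   W (\<lambda>x. h1 x * h2 x) z (a1 * h2 z + h1 z * a2) (b1 * h2 z + h1 z * b2)"
  unfolding W_def by (rule has_derivative_eq_rhs[OF has_derivative_mult], assumption, assumption, auto simp: algebra_simps)

lemma W_comp: "W h (f z) a b \<Longrightarrow> (f has_field_derivative d) (at z) \<Longrightarrow>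
   W (\<lambda>x. h (f x)) z (a * d) (b * cnj d)"
  unfolding W_def has_field_derivative_def
  by (rule has_derivative_eq_rhs, rule has_derivative_compose, assumption, assumption,
      auto simp: algebra_simps)

lemma W_holo: "(f has_field_derivative d) (at z) \<Longrightarrow> W f z d 0"
  unfolding W_def has_field_derivative_def
  by (rule has_derivative_eq_rhs, assumption, auto simp: mult.commute)

lemma W_cnj: "(f has_field_derivative d) (at z) \<Longrightarrow> W (\<lambda>x. cnj (f x)) z 0 (cnj d)"
  unfolding W_def has_field_derivative_def
  by (rule has_derivative_eq_rhs, rule has_derivative_compose[where g=cnj],
      assumption, rule bounded_linear.has_derivative[OF bounded_linear_cnj], rule has_derivative_ident,
      auto simp: algebra_simps)

lemma local_D:
  assumes "open U" "\<And>t. t \<in> U \<Longrightarrow> h1 t = h2 t" "z \<in> U"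
  shows "Dz h1 z = Dz h2 z" "Dzb h1 z = Dzb h2 z"
proof -
  have "(h1 has_derivative D) (at z) \<longleftrightarrow> (h2 has_derivative D) (at z)" for D
    using assms has_derivative_transform_within_open by metis
  then have "frechet_derivative h1 (at z) = frechet_derivative h2 (at z)"
    unfolding frechet_derivative_def by simp
  then show "Dz h1 z = Dz h2 z" "Dzb h1 z = Dzb h2 z"
    unfolding Dz_def Dzb_def dx_def dy_def by simp_all
qed

definition RAc :: "(complex \<Rightarrow> complex) \<Rightarrow> complex set \<Rightarrow> bool" where
  "RAc h V \<longleftrightarrow> (\<forall>z0\<in>V. \<exists>r>0. \<exists>c::nat\<Rightarrow>nat\<Rightarrow>complex.
     (\<forall>s. 0 < s \<and> s < r \<longrightarrow> (\<lambda>(j,k). norm (c j k) * s ^ (j+k)) summable_on UNIV) \<and>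
     (\<forall>x y. \<bar>x\<bar> < r \<and> \<bar>y\<bar> < r \<longrightarrow>
        ((\<lambda>(j,k). c j k * of_real x ^ j * of_real y ^ k) has_sum h (z0 + Complex x y)) UNIV))"

lemma pow_bound:
  fixes s t :: real assumes "0 < s" "s < t"
  shows "\<exists>B>0. \<forall>n. real n * s ^ n \<le> B * t ^ n"
proof -
  have "norm (s / t) < 1" using assms by simp
  from powser_times_n_limit_0[OF this] have "Bseq (\<lambda>n. of_nat n * (s/t) ^ n)"
    using convergent_imp_Bseq convergentI by blast
  then obtain B where B: "B > 0" "\<And>n. norm (of_nat n * (s/t) ^ n) \<le> B" unfolding Bseq_def by blast
  have "real n * s ^ n \<le> B * t ^ n" for n
  proof -
    have "real n * (s/t) ^ n \<le> B" using B(2)[of n] assms by simp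
    then have "real n * (s/t) ^ n * t ^ n \<le> B * t ^ n" using assms by (intro mult_right_mono) auto
    then show ?thesis using assms by (simp add: power_divide)
  qed
  then show ?thesis using B by blast
qed

lemma pow_bound2:
  fixes s t :: real assumes "0 < s" "s < t"
  shows "\<exists>B>0. \<forall>n. real n * s ^ (n - 1) \<le> B * t ^ n"
proof -
  obtain B where B: "B > 0" "\<And>n. real n * s ^ n \<le> B * t ^ n" using pow_bound[OF assms] by blast
  have "real n * s ^ (n - 1) \<le> (B / s) * t ^ n" for n
  proof (cases n)
    case 0 then show ?thesis using assms B by simp
  next
    case (Suc m)
    have eq: "real n * s ^ n = s * (real n * s ^ (n - 1))" using Suc by simp
    have "s * (real n * s ^ (n - 1)) \<le> B * t ^ n" using B(2)[of n] eq by linarith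
    then show ?thesis using assms by (simp add: field_simps mult.commute)
  qed
  then show ?thesis using B assms by (intro exI[of _ "B / s"]) auto
qed

lemma conv_aux:
  fixes a b u v \<rho> :: real
  assumes "\<bar>a\<bar> < \<rho>" "\<bar>b\<bar> < \<rho>" "u \<ge> 0" "v \<ge> 0" "u + v = 1"
  shows "\<bar>u * a + v * b\<bar> < \<rho>"
proof -
  define m where "m = max \<bar>a\<bar> \<bar>b\<bar>"
  have "\<bar>u * a + v * b\<bar> \<le> u * \<bar>a\<bar> + v * \<bar>b\<bar>"
    using assms by (metis abs_mult abs_of_nonneg abs_triangle_ineq)
  also have "\<dots> \<le> u * m + v * m"
    using assms unfolding m_def by (intro add_mono mult_left_mono) auto
  also have "\<dots> = m" using assms by (simp add: distrib_right[symmetric])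
  also have "m < \<rho>" using assms unfolding m_def by simp
  finally show ?thesis .
qed

lemma aux_pow:
  fixes a b \<rho> :: real
  assumes "0 \<le> a" "a \<le> \<rho>" "0 \<le> b" "b \<le> \<rho>"
  shows "real j * a ^ (j - 1) * b ^ k \<le> real j * \<rho> ^ (j + k - 1)"
proof (cases j)
  case 0 then show ?thesis by simp
next
  case (Suc m)
  have "a ^ (j - 1) * b ^ k \<le> \<rho> ^ (j - 1) * \<rho> ^ k"
    using assms by (intro mult_mono power_mono) auto
  also have "\<dots> = \<rho> ^ (j + k - 1)" using Suc by (simp add: power_add[symmetric])
  finally show ?thesis by (simp add: mult.assoc mult_left_mono)
qed

lemma aux_pow':
  fixes a b \<rho> :: real
  assumes "0 \<le> a" "a \<le> \<rho>" "0 \<le> b" "b \<le> \<rho>"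
  shows "real k * a ^ j * b ^ (k - 1) \<le> real k * \<rho> ^ (j + k - 1)"
  using aux_pow[OF assms(3,4,1,2), of k j] by (simp add: add.commute mult.commute mult.left_commute)

lemma core:
  fixes c :: "nat \<Rightarrow> nat \<Rightarrow> complex" and h :: "complex \<Rightarrow> complex"
  assumes r: "r > 0"
    and summ: "\<And>s. 0 < s \<Longrightarrow> s < r \<Longrightarrow> (\<lambda>(j,k). norm (c j k) * s ^ (j+k)) summable_on UNIV"
    and hs: "\<And>x y. \<bar>x\<bar> < r \<Longrightarrow> \<bar>y\<bar> < r \<Longrightarrow>
        ((\<lambda>(j,k). c j k * of_real x ^ j * of_real y ^ k) has_sum h (z0 + Complex x y)) UNIV"
    and x0: "\<bar>x0\<bar> < r" and y0: "\<bar>y0\<bar> < r"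
  shows "\<exists>DX DY. ((\<lambda>(j,k). c j k * of_nat j * of_real x0 ^ (j-1) * of_real y0 ^ k) has_sum DX) UNIV \<and>
     ((\<lambda>(j,k). c j k * of_nat k * of_real x0 ^ j * of_real y0 ^ (k-1)) has_sum DY) UNIV \<and>
     (h has_derivative (\<lambda>v. of_real (Re v) * DX + of_real (Im v) * DY)) (at (z0 + Complex x0 y0))"
proof -
  define \<rho> where "\<rho> = (max \<bar>x0\<bar> \<bar>y0\<bar> + r) / 2"
  have \<rho>: "0 < \<rho>" "\<rho> < r" "\<bar>x0\<bar> < \<rho>" "\<bar>y0\<bar> < \<rho>" using r x0 y0 unfolding \<rho>_def by auto
  define t where "t = (\<rho> + r) / 2"
  have t: "\<rho> < t" "t < r" "0 < t" using \<rho> unfolding t_def by auto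
  obtain B where B: "B > 0" "\<And>n. real n * \<rho> ^ (n - 1) \<le> B * t ^ n"
    using pow_bound2[OF \<rho>(1) t(1)] by blast
  define Mf where "Mf = (\<lambda>(j::nat,k::nat). norm (c j k) * (real (j+k) * \<rho> ^ (j+k-1)))"
  have Mf_nn: "Mf jk \<ge> 0" for jk unfolding Mf_def using \<rho>(1) by (auto split: prod.splits)
  have "(\<lambda>(j,k). B * (norm (c j k) * t ^ (j+k))) summable_on UNIV"
    using summable_on_cmult_right[OF summ[OF t(3) t(2)]] by (simp add: case_prod_unfold)
  then have Mf_sum: "Mf summable_on UNIV"
  proof (rule summable_on_comparison_test)
    fix jk :: "nat \<times> nat"
    obtain j k where jk: "jk = (j,k)" by fastforce
    have "norm (c j k) * (real (j+k) * \<rho> ^ (j+k-1)) \<le> norm (c j k) * (B * t ^ (j+k))"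
      using B(2)[of "j+k"] by (intro mult_left_mono) auto
    then show "Mf jk \<le> (case jk of (j, k) \<Rightarrow> B * (norm (c j k) * t ^ (j + k)))"
      unfolding Mf_def jk by (simp add: mult_ac)
  qed (rule Mf_nn)
  define M where "M = (\<lambda>n. Mf (prod_decode n))"
  have "M summable_on UNIV"
    unfolding M_def using summable_on_reindex_bij_betw[OF bij_prod_decode, of Mf] Mf_sum by simp
  then have Msum: "summable M"
    using summable_on_UNIV_nonneg_real_iff[of M] Mf_nn unfolding M_def by simp
  define X where "X = (\<lambda>z. complex_of_real (Re (z - z0)))"
  define Y where "Y = (\<lambda>z. complex_of_real (Im (z - z0)))"
  define fn where "fn = (\<lambda>n z. case prod_decode n of (j,k) \<Rightarrow> c j k * X z ^ j * Y z ^ k)"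
  define fd where "fd = (\<lambda>n z v. case prod_decode n of (j,k) \<Rightarrow>
       c j k * (of_nat j * X z ^ (j-1) * Y z ^ k * of_real (Re v) + of_nat k * X z ^ j * Y z ^ (k-1) * of_real (Im v)))"
  define S where "S = {z. \<bar>Re (z - z0)\<bar> < \<rho> \<and> \<bar>Im (z - z0)\<bar> < \<rho>}"
  have openS: "open S" unfolding S_def
    by (intro open_Collect_conj open_Collect_less continuous_intros)
  have convS: "convex S" unfolding S_def convex_def
  proof (clarsimp)
    fix x y :: complex and u v :: real
    assume a: "\<bar>Re x - Re z0\<bar> < \<rho>" "\<bar>Im x - Im z0\<bar> < \<rho>" "\<bar>Re y - Re z0\<bar> < \<rho>" "\<bar>Im y - Im z0\<bar> < \<rho>"
      "0 \<le> u" "0 \<le> v" "u + v = 1"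
    have "u * Re x + v * Re y - Re z0 = u * (Re x - Re z0) + v * (Re y - Re z0)"
      using a(7) by (simp add: algebra_simps) (metis add.commute diff_add_cancel distrib_right mult_1)
    moreover have "u * Im x + v * Im y - Im z0 = u * (Im x - Im z0) + v * (Im y - Im z0)"
      using a(7) by (simp add: algebra_simps) (metis add.commute diff_add_cancel distrib_right mult_1)
    ultimately show "\<bar>u * Re x + v * Re y - Re z0\<bar> < \<rho> \<and> \<bar>u * Im x + v * Im y - Im z0\<bar> < \<rho>"
      using conv_aux[OF a(1,3,5,6,7)] conv_aux[OF a(2,4,5,6,7)] by simp
  qed
  define z1 where "z1 = z0 + Complex x0 y0"
  have z1S: "z1 \<in> S" unfolding S_def z1_def using \<rho> by simp
  have blR: "bounded_linear (\<lambda>v. complex_of_real (Re v))"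
    by (rule bounded_linear_compose[OF bounded_linear_of_real bounded_linear_Re])
  have blI: "bounded_linear (\<lambda>v. complex_of_real (Im v))"
    by (rule bounded_linear_compose[OF bounded_linear_of_real bounded_linear_Im])
  have dX: "(X has_derivative (\<lambda>v. complex_of_real (Re v))) (at z within S)" for z
    unfolding X_def
    by (rule has_derivative_eq_rhs[OF bounded_linear.has_derivative[OF blR has_derivative_diff[OF has_derivative_ident has_derivative_const]]])
       (auto simp: fun_eq_iff)
  have dY: "(Y has_derivative (\<lambda>v. complex_of_real (Im v))) (at z within S)" for z
    unfolding Y_def
    by (rule has_derivative_eq_rhs[OF bounded_linear.has_derivative[OF blI has_derivative_diff[OF has_derivative_ident has_derivative_const]]])
       (auto simp: fun_eq_iff)
  have dfn: "(fn n has_derivative fd n z) (at z within S)" for n z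
  proof -
    obtain j k where jk: "prod_decode n = (j,k)" by fastforce
    have "((\<lambda>z. c j k * X z ^ j * Y z ^ k) has_derivative fd n z) (at z within S)"
      by (rule has_derivative_eq_rhs[OF has_derivative_mult[OF has_derivative_mult[OF has_derivative_const
            has_derivative_power[OF dX]] has_derivative_power[OF dY]]])
         (auto simp: fun_eq_iff fd_def jk algebra_simps)
    then show ?thesis unfolding fn_def jk by simp
  qed
  have bnd: "norm (fd n z v) \<le> M n * norm v" if "z \<in> S" for n z v
  proof -
    obtain j k where jk: "prod_decode n = (j,k)" by fastforce
    define a where "a = \<bar>Re (z - z0)\<bar>"
    define b where "b = \<bar>Im (z - z0)\<bar>"
    have ab: "0 \<le> a" "a \<le> \<rho>" "0 \<le> b" "b \<le> \<rho>" using that unfolding a_def b_def S_def by auto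
    have nX: "norm (X z) = a" and nY: "norm (Y z) = b" unfolding X_def Y_def a_def b_def by (simp_all del: of_real_diff add: of_real_diff[symmetric])
    have "norm (fd n z v) \<le> norm (c j k) * (real j * a ^ (j-1) * b ^ k * \<bar>Re v\<bar> + real k * a ^ j * b ^ (k-1) * \<bar>Im v\<bar>)"
      unfolding fd_def jk using nX nY
      by (simp add: norm_mult norm_power mult_left_mono norm_triangle_ineq[THEN order_trans])
    also have "\<dots> \<le> norm (c j k) * (real j * \<rho> ^ (j + k - 1) * norm v + real k * \<rho> ^ (j + k - 1) * norm v)"
    proof (intro mult_left_mono add_mono)
      show "real j * a ^ (j - 1) * b ^ k * \<bar>Re v\<bar> \<le> real j * \<rho> ^ (j + k - 1) * norm v"
        by (rule mult_mono[OF aux_pow[OF ab] abs_Re_le_cmod]) (use \<rho>(1) in auto)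
      show "real k * a ^ j * b ^ (k - 1) * \<bar>Im v\<bar> \<le> real k * \<rho> ^ (j + k - 1) * norm v"
        by (rule mult_mono[OF aux_pow'[OF ab] abs_Im_le_cmod]) (use \<rho>(1) in auto)
    qed simp
    also have "\<dots> = M n * norm v" unfolding M_def Mf_def jk by (simp add: algebra_simps)
    finally show ?thesis .
  qed
  have sumfd: "summable (\<lambda>i. norm (fd i z v))" if "z \<in> S" for z v
    by (rule summable_comparison_test'[OF summable_mult2[OF Msum, of "norm v"], where N=0]) (simp add: bnd[OF that])
  have sumfd': "summable (\<lambda>i. fd i z v)" if "z \<in> S" for z v
    by (rule summable_norm_cancel[OF sumfd[OF that]])
  have sums: "(\<lambda>n. fn n z) sums h z" if "z \<in> S" for z
  proof -
    define x where "x = Re (z - z0)"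
    define y where "y = Im (z - z0)"
    have xyr: "\<bar>x\<bar> < r" "\<bar>y\<bar> < r" using that \<rho> unfolding x_def y_def S_def by auto
    have ez: "z0 + Complex x y = z" unfolding x_def y_def by (simp add: complex_eq_iff)
    have "((\<lambda>n. (\<lambda>(j,k). c j k * of_real x ^ j * of_real y ^ k) (prod_decode n)) has_sum h z) UNIV"
      using has_sum_reindex_bij_betw[OF bij_prod_decode] hs[OF xyr, unfolded ez] by blast
    moreover have "(\<lambda>(j,k). c j k * of_real x ^ j * of_real y ^ k) (prod_decode n) = fn n z" for n
      unfolding fn_def X_def Y_def x_def y_def by (simp add: case_prod_unfold)
    ultimately show ?thesis by (intro has_sum_imp_sums) simp
  qed
  have unif: "\<forall>\<^sub>F n in sequentially. \<forall>z\<in>S. \<forall>v. norm (sum (\<lambda>i. fd i z v) {..<n} - (\<Sum>i. fd i z v)) \<le> e * norm v"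
    if e: "e > 0" for e
  proof -
    obtain N where N: "\<And>n. n \<ge> N \<Longrightarrow> norm (\<Sum>i. M (i + n)) < e" using suminf_exist_split[OF e Msum] by blast
    have "norm (sum (\<lambda>i. fd i z v) {..<n} - (\<Sum>i. fd i z v)) \<le> e * norm v" if "n \<ge> N" "z \<in> S" for n z v
    proof -
      have "(\<Sum>i. fd i z v) = (\<Sum>i. fd (i + n) z v) + sum (\<lambda>i. fd i z v) {..<n}"
        using suminf_split_initial_segment[OF sumfd'[OF that(2)]] by simp
      then have "norm (sum (\<lambda>i. fd i z v) {..<n} - (\<Sum>i. fd i z v)) = norm (\<Sum>i. fd (i + n) z v)"
        by (simp add: norm_minus_commute)
      also have "\<dots> \<le> (\<Sum>i. norm (fd (i + n) z v))"
        by (rule summable_norm[OF summable_ignore_initial_segment[OF sumfd[OF that(2)]]])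
      also have "\<dots> \<le> (\<Sum>i. M (i + n) * norm v)"
        by (rule suminf_le[OF bnd[OF that(2)] summable_ignore_initial_segment[OF sumfd[OF that(2)]]
              summable_mult2[OF summable_ignore_initial_segment[OF Msum]]])
      also have "\<dots> = (\<Sum>i. M (i + n)) * norm v"
        by (rule suminf_mult2[symmetric, OF summable_ignore_initial_segment[OF Msum]])
      also have "\<dots> \<le> e * norm v"
        using N[OF that(1)] by (intro mult_right_mono) auto
      finally show ?thesis .
    qed
    then show ?thesis unfolding eventually_sequentially by blast
  qed
  obtain g where g: "\<And>z. z \<in> S \<Longrightarrow> (\<lambda>n. fn n z) sums g z \<and> (g has_derivative (\<lambda>v. \<Sum>i. fd i z v)) (at z within S)"
    using has_derivative_series[OF convS dfn unif z1S sums[OF z1S]] by blast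
  have gh: "g z = h z" if "z \<in> S" for z using g[OF that] sums[OF that] sums_unique2 by blast
  have "(h has_derivative (\<lambda>v. \<Sum>i. fd i z1 v)) (at z1 within S)"
    by (rule has_derivative_transform_within_open[OF conjunct2[OF g[OF z1S]] openS z1S gh])
  then have hd: "(h has_derivative (\<lambda>v. \<Sum>i. fd i z1 v)) (at z1)"
    using at_within_open[OF z1S openS] by simp
  define ax where "ax = (\<lambda>i. fd i z1 1)"
  define ay where "ay = (\<lambda>i. fd i z1 \<i>)"
  define \<phi>x where "\<phi>x = (\<lambda>(j,k). c j k * of_nat j * of_real x0 ^ (j-1) * of_real y0 ^ k)"
  define \<phi>y where "\<phi>y = (\<lambda>(j,k). c j k * of_nat k * of_real x0 ^ j * of_real y0 ^ (k-1))"
  have X1: "X z1 = of_real x0" "Y z1 = of_real y0" unfolding X_def Y_def z1_def by simp_all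
  have axy: "ax i = \<phi>x (prod_decode i)" "ay i = \<phi>y (prod_decode i)" for i
  proof -
    obtain j k where jk: "prod_decode i = (j,k)" by fastforce
    show "ax i = \<phi>x (prod_decode i)" unfolding ax_def fd_def \<phi>x_def jk X1 by simp
    show "ay i = \<phi>y (prod_decode i)" unfolding ay_def fd_def \<phi>y_def jk X1 by simp
  qed
  have fdxy: "fd i z1 v = ax i * of_real (Re v) + ay i * of_real (Im v)" for i v
  proof -
    obtain j k where jk: "prod_decode i = (j,k)" by fastforce
    show ?thesis unfolding axy \<phi>x_def \<phi>y_def fd_def jk X1 by (simp add: algebra_simps)
  qed
  have sax: "summable (\<lambda>i. norm (ax i))" "summable (\<lambda>i. norm (ay i))"
    unfolding ax_def ay_def using sumfd[OF z1S] by auto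
  have sax': "summable ax" "summable ay" using sax summable_norm_cancel by auto
  have lin: "(\<Sum>i. fd i z1 v) = of_real (Re v) * suminf ax + of_real (Im v) * suminf ay" for v
  proof -
    have "(\<Sum>i. fd i z1 v) = (\<Sum>i. ax i * of_real (Re v) + ay i * of_real (Im v))"
      unfolding fdxy by (rule refl)
    also have "\<dots> = (\<Sum>i. ax i * of_real (Re v)) + (\<Sum>i. ay i * of_real (Im v))"
      by (rule suminf_add[symmetric]) (rule summable_mult2, rule sax')+
    also have "\<dots> = suminf ax * of_real (Re v) + suminf ay * of_real (Im v)"
      using suminf_mult2[OF sax'(1)] suminf_mult2[OF sax'(2)] by simp
    finally show ?thesis by (simp add: mult.commute)
  qed
  have hax: "(ax has_sum suminf ax) UNIV"
    by (rule norm_summable_imp_has_sum[OF sax(1) summable_sums[OF sax'(1)]])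
  have hay: "(ay has_sum suminf ay) UNIV"
    by (rule norm_summable_imp_has_sum[OF sax(2) summable_sums[OF sax'(2)]])
  have DX: "(\<phi>x has_sum suminf ax) UNIV"
    using hax has_sum_reindex_bij_betw[OF bij_prod_decode, of \<phi>x] unfolding axy by blast
  have DY: "(\<phi>y has_sum suminf ay) UNIV"
    using hay has_sum_reindex_bij_betw[OF bij_prod_decode, of \<phi>y] unfolding axy by blast
  have hd': "(h has_derivative (\<lambda>v. of_real (Re v) * suminf ax + of_real (Im v) * suminf ay)) (at z1)"
    using hd unfolding lin .
  show ?thesis
    using DX DY hd' unfolding \<phi>x_def \<phi>y_def z1_def by blast
qed

lemma RA_diff: "RAc h V \<Longrightarrow> z \<in> V \<Longrightarrow> h differentiable (at z)"
proof -
  assume "RAc h V" "z \<in> V"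
  then obtain r c where r: "r > 0"
    and summ: "\<And>s. 0 < s \<Longrightarrow> s < r \<Longrightarrow> (\<lambda>(j,k). norm (c j k) * s ^ (j+k)) summable_on UNIV"
    and hs: "\<And>x y. \<bar>x\<bar> < r \<Longrightarrow> \<bar>y\<bar> < r \<Longrightarrow>
        ((\<lambda>(j,k). c j k * of_real x ^ j * of_real y ^ k) has_sum h (z + Complex x y)) UNIV"
    unfolding RAc_def by blast
  obtain DX DY where hd: "(h has_derivative (\<lambda>v. of_real (Re v) * DX + of_real (Im v) * DY)) (at (z + Complex 0 0))"
    using core[OF r summ hs, of 0 0] r by auto
  have "z + Complex 0 0 = z" by (simp add: complex_eq_iff)
  with hd show ?thesis unfolding differentiable_def by auto
qed

lemma shift_summable:
  assumes "(\<lambda>(j,k). norm (c j k) * t ^ (j+k)) summable_on UNIV"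
  shows "(\<lambda>(j,k). norm (c (Suc j) k) * t ^ (Suc j+k)) summable_on UNIV"
        "(\<lambda>(j,k). norm (c j (Suc k)) * t ^ (j+Suc k)) summable_on UNIV"
proof -
  define \<psi> where "\<psi> = (\<lambda>(j,k). norm (c j k) * t ^ (j+k))"
  have i1: "inj (\<lambda>(j::nat,k::nat). (Suc j, k))" by (auto simp: inj_def)
  have i2: "inj (\<lambda>(j::nat,k::nat). (j, Suc k))" by (auto simp: inj_def)
  have "\<psi> summable_on (range (\<lambda>(j::nat,k::nat). (Suc j, k)))"
    using summable_on_subset_banach[OF assms[folded \<psi>_def]] by blast
  then have "(\<psi> \<circ> (\<lambda>(j,k). (Suc j, k))) summable_on UNIV"
    using summable_on_reindex[OF i1] by blast
  then show "(\<lambda>(j,k). norm (c (Suc j) k) * t ^ (Suc j+k)) summable_on UNIV"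
    unfolding \<psi>_def by (simp add: o_def case_prod_unfold)
  have "\<psi> summable_on (range (\<lambda>(j::nat,k::nat). (j, Suc k)))"
    using summable_on_subset_banach[OF assms[folded \<psi>_def]] by blast
  then have "(\<psi> \<circ> (\<lambda>(j,k). (j, Suc k))) summable_on UNIV"
    using summable_on_reindex[OF i2] by blast
  then show "(\<lambda>(j,k). norm (c j (Suc k)) * t ^ (j+Suc k)) summable_on UNIV"
    unfolding \<psi>_def by (simp add: o_def case_prod_unfold)
qed

lemma RA_dx: "RAc h V \<Longrightarrow> RAc (dx h) V"
  unfolding RAc_def
proof (intro ballI)
  fix z0 assume "\<forall>z0\<in>V. \<exists>r>0. \<exists>c::nat\<Rightarrow>nat\<Rightarrow>complex.
     (\<forall>s. 0 < s \<and> s < r \<longrightarrow> (\<lambda>(j,k). norm (c j k) * s ^ (j+k)) summable_on UNIV) \<and>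
     (\<forall>x y. \<bar>x\<bar> < r \<and> \<bar>y\<bar> < r \<longrightarrow>
        ((\<lambda>(j,k). c j k * of_real x ^ j * of_real y ^ k) has_sum h (z0 + Complex x y)) UNIV)" "z0 \<in> V"
  then obtain r c where r: "r > 0"
    and summ: "\<And>s. 0 < s \<Longrightarrow> s < r \<Longrightarrow> (\<lambda>(j,k). norm (c j k) * s ^ (j+k)) summable_on UNIV"
    and hs: "\<And>x y. \<bar>x\<bar> < r \<Longrightarrow> \<bar>y\<bar> < r \<Longrightarrow>
        ((\<lambda>(j,k). c j k * of_real x ^ j * of_real y ^ k) has_sum h (z0 + Complex x y)) UNIV"
    by blast
  define c' where "c' = (\<lambda>j k. c (Suc j) k * of_nat (Suc j))"
  have s': "(\<lambda>(j,k). norm (c' j k) * s ^ (j+k)) summable_on UNIV" if s: "0 < s" "s < r" for s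
  proof -
    define t where "t = (s + r) / 2"
    have t: "s < t" "t < r" "0 < t" using s unfolding t_def by auto
    obtain B where B: "B > 0" "\<And>n. real n * s ^ (n - 1) \<le> B * t ^ n" using pow_bound2[OF s(1) t(1)] by blast
    have "(\<lambda>(j,k). B * (norm (c (Suc j) k) * t ^ (Suc j+k))) summable_on UNIV"
      using summable_on_cmult_right[OF shift_summable(1)[OF summ[OF t(3) t(2)]], of B]
      by (simp add: case_prod_unfold)
    then show ?thesis
    proof (rule summable_on_comparison_test)
      fix jk :: "nat \<times> nat"
      obtain j k where jk: "jk = (j,k)" by fastforce
      have nj: "cmod (1 + complex_of_nat j) = 1 + real j"
        by (metis norm_of_nat of_nat_Suc add.commute)
      have b1: "real (Suc j) * s ^ j \<le> B * t ^ Suc j" using B(2)[of "Suc j"] by simp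
      have b2: "s ^ k \<le> t ^ k" by (rule power_mono) (use s t in auto)
      have "real (Suc j) * s ^ j * s ^ k \<le> (B * t ^ Suc j) * t ^ k"
        by (rule mult_mono[OF b1 b2]) (use B(1) t(3) s(1) in auto)
      then have "norm (c (Suc j) k) * (real (Suc j) * s ^ j * s ^ k) \<le> norm (c (Suc j) k) * ((B * t ^ Suc j) * t ^ k)"
        by (intro mult_left_mono) auto
      then show "(case jk of (j, k) \<Rightarrow> norm (c' j k) * s ^ (j + k)) \<le> (case jk of (j, k) \<Rightarrow> B * (norm (c (Suc j) k) * t ^ (Suc j + k)))"
        unfolding jk c'_def using nj by (simp add: norm_mult power_add mult_ac)
    qed (use s in \<open>auto split: prod.splits\<close>)
  qed
  have v': "((\<lambda>(j,k). c' j k * of_real x ^ j * of_real y ^ k) has_sum dx h (z0 + Complex x y)) UNIV"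
    if xy: "\<bar>x\<bar> < r" "\<bar>y\<bar> < r" for x y
  proof -
    obtain DX DY where DX: "((\<lambda>(j,k). c j k * of_nat j * of_real x ^ (j-1) * of_real y ^ k) has_sum DX) UNIV"
      and hd: "(h has_derivative (\<lambda>v. of_real (Re v) * DX + of_real (Im v) * DY)) (at (z0 + Complex x y))"
      using core[OF r summ hs xy] by blast
    have "dx h (z0 + Complex x y) = DX"
      unfolding dx_def using frechet_derivative_at[OF hd] by (metis (no_types, lifting) one_complex.simps of_real_0 of_real_1 mult_1 mult_zero_left add_0_right)
    define \<phi> where "\<phi> = (\<lambda>(j,k). c j k * of_nat j * of_real x ^ (j-1) * of_real y ^ k)"
    have i1: "inj (\<lambda>(j::nat,k::nat). (Suc j, k))" by (auto simp: inj_def)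
    have "(\<phi> has_sum DX) (range (\<lambda>(j::nat,k::nat). (Suc j, k)))"
    proof (subst has_sum_cong_neutral[where g=\<phi> and T=UNIV])
      fix jk assume "jk \<in> UNIV - range (\<lambda>(j::nat,k::nat). (Suc j, k))"
      then obtain k where "jk = (0,k)"
        by (metis (no_types, lifting) DiffD2 case_prod_conv not0_implies_Suc old.prod.exhaust rangeI)
      then show "\<phi> jk = 0" unfolding \<phi>_def by simp
    qed (use DX \<phi>_def in auto)
    then have "(\<phi> \<circ> (\<lambda>(j,k). (Suc j, k)) has_sum DX) UNIV"
      using has_sum_reindex[OF i1] by blast
    moreover have "\<phi> \<circ> (\<lambda>(j,k). (Suc j, k)) = (\<lambda>(j,k). c' j k * of_real x ^ j * of_real y ^ k)"
      unfolding \<phi>_def c'_def by (auto simp: fun_eq_iff mult_ac)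
    ultimately show ?thesis using \<open>dx h (z0 + Complex x y) = DX\<close> by simp
  qed
  show "\<exists>r>0. \<exists>c::nat\<Rightarrow>nat\<Rightarrow>complex.
     (\<forall>s. 0 < s \<and> s < r \<longrightarrow> (\<lambda>(j,k). norm (c j k) * s ^ (j+k)) summable_on UNIV) \<and>
     (\<forall>x y. \<bar>x\<bar> < r \<and> \<bar>y\<bar> < r \<longrightarrow>
        ((\<lambda>(j,k). c j k * of_real x ^ j * of_real y ^ k) has_sum dx h (z0 + Complex x y)) UNIV)"
    using r s' v' by blast
qed

lemma RA_dy: "RAc h V \<Longrightarrow> RAc (dy h) V"
  unfolding RAc_def
proof (intro ballI)
  fix z0 assume "\<forall>z0\<in>V. \<exists>r>0. \<exists>c::nat\<Rightarrow>nat\<Rightarrow>complex.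
     (\<forall>s. 0 < s \<and> s < r \<longrightarrow> (\<lambda>(j,k). norm (c j k) * s ^ (j+k)) summable_on UNIV) \<and>
     (\<forall>x y. \<bar>x\<bar> < r \<and> \<bar>y\<bar> < r \<longrightarrow>
        ((\<lambda>(j,k). c j k * of_real x ^ j * of_real y ^ k) has_sum h (z0 + Complex x y)) UNIV)" "z0 \<in> V"
  then obtain r c where r: "r > 0"
    and summ: "\<And>s. 0 < s \<Longrightarrow> s < r \<Longrightarrow> (\<lambda>(j,k). norm (c j k) * s ^ (j+k)) summable_on UNIV"
    and hs: "\<And>x y. \<bar>x\<bar> < r \<Longrightarrow> \<bar>y\<bar> < r \<Longrightarrow>
        ((\<lambda>(j,k). c j k * of_real x ^ j * of_real y ^ k) has_sum h (z0 + Complex x y)) UNIV"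
    by blast
  define c' where "c' = (\<lambda>j k. c j (Suc k) * of_nat (Suc k))"
  have s': "(\<lambda>(j,k). norm (c' j k) * s ^ (j+k)) summable_on UNIV" if s: "0 < s" "s < r" for s
  proof -
    define t where "t = (s + r) / 2"
    have t: "s < t" "t < r" "0 < t" using s unfolding t_def by auto
    obtain B where B: "B > 0" "\<And>n. real n * s ^ (n - 1) \<le> B * t ^ n" using pow_bound2[OF s(1) t(1)] by blast
    have "(\<lambda>(j,k). B * (norm (c j (Suc k)) * t ^ (j+Suc k))) summable_on UNIV"
      using summable_on_cmult_right[OF shift_summable(2)[OF summ[OF t(3) t(2)]], of B]
      by (simp add: case_prod_unfold)
    then show ?thesis
    proof (rule summable_on_comparison_test)
      fix jk :: "nat \<times> nat"
      obtain j k where jk: "jk = (j,k)" by fastforce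
      have nj: "cmod (1 + complex_of_nat k) = 1 + real k"
        by (metis norm_of_nat of_nat_Suc add.commute)
      have b1: "real (Suc k) * s ^ k \<le> B * t ^ Suc k" using B(2)[of "Suc k"] by simp
      have b2: "s ^ j \<le> t ^ j" by (rule power_mono) (use s t in auto)
      have "real (Suc k) * s ^ k * s ^ j \<le> (B * t ^ Suc k) * t ^ j"
        by (rule mult_mono[OF b1 b2]) (use B(1) t(3) s(1) in auto)
      then have "norm (c j (Suc k)) * (real (Suc k) * s ^ k * s ^ j) \<le> norm (c j (Suc k)) * ((B * t ^ Suc k) * t ^ j)"
        by (intro mult_left_mono) auto
      then show "(case jk of (j, k) \<Rightarrow> norm (c' j k) * s ^ (j + k)) \<le> (case jk of (j, k) \<Rightarrow> B * (norm (c j (Suc k)) * t ^ (j + Suc k)))"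
        unfolding jk c'_def using nj by (simp add: norm_mult power_add mult_ac)
    qed (use s in \<open>auto split: prod.splits\<close>)
  qed
  have v': "((\<lambda>(j,k). c' j k * of_real x ^ j * of_real y ^ k) has_sum dy h (z0 + Complex x y)) UNIV"
    if xy: "\<bar>x\<bar> < r" "\<bar>y\<bar> < r" for x y
  proof -
    obtain DX DY where DX: "((\<lambda>(j,k). c j k * of_nat k * of_real x ^ j * of_real y ^ (k-1)) has_sum DY) UNIV"
      and hd: "(h has_derivative (\<lambda>v. of_real (Re v) * DX + of_real (Im v) * DY)) (at (z0 + Complex x y))"
      using core[OF r summ hs xy] by blast
    have "dy h (z0 + Complex x y) = DY"
      unfolding dy_def by (simp add: frechet_derivative_at[OF hd, symmetric])
    define \<phi> where "\<phi> = (\<lambda>(j,k). c j k * of_nat k * of_real x ^ j * of_real y ^ (k-1))"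
    have i1: "inj (\<lambda>(j::nat,k::nat). (j, Suc k))" by (auto simp: inj_def)
    have "(\<phi> has_sum DY) (range (\<lambda>(j::nat,k::nat). (j, Suc k)))"
    proof (subst has_sum_cong_neutral[where g=\<phi> and T=UNIV])
      fix jk assume "jk \<in> UNIV - range (\<lambda>(j::nat,k::nat). (j, Suc k))"
      then obtain j where "jk = (j,0)"
        by (metis (no_types, lifting) DiffD2 case_prod_conv not0_implies_Suc old.prod.exhaust rangeI)
      then show "\<phi> jk = 0" unfolding \<phi>_def by simp
    qed (use DX \<phi>_def in auto)
    then have "(\<phi> \<circ> (\<lambda>(j,k). (j, Suc k)) has_sum DY) UNIV"
      using has_sum_reindex[OF i1] by blast
    moreover have "\<phi> \<circ> (\<lambda>(j,k). (j, Suc k)) = (\<lambda>(j,k). c' j k * of_real x ^ j * of_real y ^ k)"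
      unfolding \<phi>_def c'_def by (auto simp: fun_eq_iff mult_ac)
    ultimately show ?thesis using \<open>dy h (z0 + Complex x y) = DY\<close> by simp
  qed
  show "\<exists>r>0. \<exists>c::nat\<Rightarrow>nat\<Rightarrow>complex.
     (\<forall>s. 0 < s \<and> s < r \<longrightarrow> (\<lambda>(j,k). norm (c j k) * s ^ (j+k)) summable_on UNIV) \<and>
     (\<forall>x y. \<bar>x\<bar> < r \<and> \<bar>y\<bar> < r \<longrightarrow>
        ((\<lambda>(j,k). c j k * of_real x ^ j * of_real y ^ k) has_sum dy h (z0 + Complex x y)) UNIV)"
    using r s' v' by blast
qed


lemma RA_lin:
  assumes "RAc h1 V" "RAc h2 V"
  shows "RAc (\<lambda>t. A * h1 t + B * h2 t) V"
  unfolding RAc_def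
proof (intro ballI)
  fix z0 assume z0: "z0 \<in> V"
  obtain r1 c1 where r1: "r1 > 0"
    and s1: "\<And>s. 0 < s \<and> s < r1 \<Longrightarrow> (\<lambda>(j,k). norm (c1 j k) * s ^ (j+k)) summable_on UNIV"
    and h1: "\<And>x y. \<bar>x\<bar> < r1 \<and> \<bar>y\<bar> < r1 \<Longrightarrow>
        ((\<lambda>(j,k). c1 j k * of_real x ^ j * of_real y ^ k) has_sum h1 (z0 + Complex x y)) UNIV"
    using assms(1) z0 unfolding RAc_def by blast
  obtain r2 c2 where r2: "r2 > 0"
    and s2: "\<And>s. 0 < s \<and> s < r2 \<Longrightarrow> (\<lambda>(j,k). norm (c2 j k) * s ^ (j+k)) summable_on UNIV"
    and h2: "\<And>x y. \<bar>x\<bar> < r2 \<and> \<bar>y\<bar> < r2 \<Longrightarrow>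
        ((\<lambda>(j,k). c2 j k * of_real x ^ j * of_real y ^ k) has_sum h2 (z0 + Complex x y)) UNIV"
    using assms(2) z0 unfolding RAc_def by blast
  define r where "r = min r1 r2"
  define c where "c = (\<lambda>j k. A * c1 j k + B * c2 j k)"
  have "(\<lambda>(j,k). norm (c j k) * s ^ (j+k)) summable_on UNIV" if s: "0 < s" "s < r" for s
  proof -
    have "(\<lambda>jk. norm A * (case jk of (j,k) \<Rightarrow> norm (c1 j k) * s ^ (j+k)) + norm B * (case jk of (j,k) \<Rightarrow> norm (c2 j k) * s ^ (j+k))) summable_on UNIV"
      using s s1[of s] s2[of s] unfolding r_def
      by (intro summable_on_add summable_on_cmult_right) auto
    then show ?thesis
    proof (rule summable_on_comparison_test)
      fix jk :: "nat \<times> nat"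
      obtain j k where jk: "jk = (j,k)" by fastforce
      have "norm (c j k) \<le> norm A * norm (c1 j k) + norm B * norm (c2 j k)"
        unfolding c_def by (metis norm_mult norm_triangle_ineq)
      then have "norm (c j k) * s ^ (j+k) \<le> (norm A * norm (c1 j k) + norm B * norm (c2 j k)) * s ^ (j+k)"
        using s by (intro mult_right_mono) auto
      then show "(case jk of (j, k) \<Rightarrow> norm (c j k) * s ^ (j + k)) \<le> norm A * (case jk of (j,k) \<Rightarrow> norm (c1 j k) * s ^ (j+k)) + norm B * (case jk of (j,k) \<Rightarrow> norm (c2 j k) * s ^ (j+k))"
        unfolding jk by (simp add: algebra_simps)
    qed (use s in \<open>auto split: prod.splits\<close>)
  qed
  moreover have "((\<lambda>(j,k). c j k * of_real x ^ j * of_real y ^ k) has_sum A * h1 (z0 + Complex x y) + B * h2 (z0 + Complex x y)) UNIV"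
    if "\<bar>x\<bar> < r \<and> \<bar>y\<bar> < r" for x y
  proof -
    have "((\<lambda>jk. A * (case jk of (j,k) \<Rightarrow> c1 j k * of_real x ^ j * of_real y ^ k) + B * (case jk of (j,k) \<Rightarrow> c2 j k * of_real x ^ j * of_real y ^ k)) has_sum A * h1 (z0 + Complex x y) + B * h2 (z0 + Complex x y)) UNIV"
      using that h1[of x y] h2[of x y] unfolding r_def
      by (intro has_sum_add has_sum_cmult_right) auto
    then show ?thesis unfolding c_def by (simp add: case_prod_unfold algebra_simps)
  qed
  moreover have "r > 0" using r1 r2 unfolding r_def by simp
  ultimately show "\<exists>r>0. \<exists>c::nat\<Rightarrow>nat\<Rightarrow>complex.
     (\<forall>s. 0 < s \<and> s < r \<longrightarrow> (\<lambda>(j,k). norm (c j k) * s ^ (j+k)) summable_on UNIV) \<and>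
     (\<forall>x y. \<bar>x\<bar> < r \<and> \<bar>y\<bar> < r \<longrightarrow>
        ((\<lambda>(j,k). c j k * of_real x ^ j * of_real y ^ k) has_sum (\<lambda>t. A * h1 t + B * h2 t) (z0 + Complex x y)) UNIV)"
    by blast
qed

lemma RA_Dz: "RAc h V \<Longrightarrow> RAc (Dz h) V"
proof -
  assume a: "RAc h V"
  have e: "Dz h = (\<lambda>t. (1/2) * dx h t + (- \<i>/2) * dy h t)"
    unfolding Dz_def by (auto simp: fun_eq_iff field_simps)
  show ?thesis unfolding e by (rule RA_lin[OF RA_dx[OF a] RA_dy[OF a]])
qed

lemma RA_Dzb: "RAc h V \<Longrightarrow> RAc (Dzb h) V"
proof -
  assume a: "RAc h V"
  have e: "Dzb h = (\<lambda>t. (1/2) * dx h t + (\<i>/2) * dy h t)"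
    unfolding Dzb_def by (auto simp: fun_eq_iff field_simps)
  show ?thesis unfolding e by (rule RA_lin[OF RA_dx[OF a] RA_dy[OF a]])
qed

lemma RA_of_real: "real_analytic_on F V \<Longrightarrow> RAc (\<lambda>t. complex_of_real (F t)) V"
  unfolding RAc_def real_analytic_on_def
proof (intro ballI)
  fix z0 assume "\<forall>z0\<in>V. \<exists>r>0. \<exists>c :: nat \<Rightarrow> nat \<Rightarrow> real.
        \<forall>x y. \<bar>x\<bar> < r \<and> \<bar>y\<bar> < r \<longrightarrow>
          ((\<lambda>(j,k). c j k * x ^ j * y ^ k) has_sum F (z0 + Complex x y)) UNIV" "z0 \<in> V"
  then obtain r c where r: "r > 0" and hs: "\<And>x y. \<bar>x\<bar> < r \<and> \<bar>y\<bar> < r \<Longrightarrow>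
          ((\<lambda>(j,k). c j k * x ^ j * y ^ k) has_sum F (z0 + Complex x y)) UNIV" by blast
  define cc where "cc = (\<lambda>j k. complex_of_real (c j k))"
  have "(\<lambda>(j,k). norm (cc j k) * s ^ (j+k)) summable_on UNIV" if s: "0 < s" "s < r" for s
  proof -
    have "(\<lambda>(j,k). c j k * s ^ j * s ^ k) summable_on UNIV"
      using hs[of s s] s summable_on_def by fastforce
    then have "(\<lambda>jk. norm ((\<lambda>(j,k). c j k * s ^ j * s ^ k) jk)) summable_on UNIV"
      using summable_on_iff_abs_summable_on_real by blast
    moreover have "norm ((\<lambda>(j,k). c j k * s ^ j * s ^ k) jk) = (\<lambda>(j,k). norm (cc j k) * s ^ (j+k)) jk" for jk
      using s unfolding cc_def by (auto simp: abs_mult power_add split: prod.splits)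
    ultimately show ?thesis by simp
  qed
  moreover have "((\<lambda>(j,k). cc j k * of_real x ^ j * of_real y ^ k) has_sum complex_of_real (F (z0 + Complex x y))) UNIV"
    if "\<bar>x\<bar> < r \<and> \<bar>y\<bar> < r" for x y
  proof -
    have "((\<lambda>jk. complex_of_real ((\<lambda>(j,k). c j k * x ^ j * y ^ k) jk)) has_sum complex_of_real (F (z0 + Complex x y))) UNIV"
      by (rule has_sum_of_real[OF hs[OF that]])
    then show ?thesis unfolding cc_def by (simp add: case_prod_unfold)
  qed
  ultimately show "\<exists>r>0. \<exists>c::nat\<Rightarrow>nat\<Rightarrow>complex.
     (\<forall>s. 0 < s \<and> s < r \<longrightarrow> (\<lambda>(j,k). norm (c j k) * s ^ (j+k)) summable_on UNIV) \<and>
     (\<forall>x y. \<bar>x\<bar> < r \<and> \<bar>y\<bar> < r \<longrightarrow>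
        ((\<lambda>(j,k). c j k * of_real x ^ j * of_real y ^ k) has_sum (\<lambda>t. complex_of_real (F t)) (z0 + Complex x y)) UNIV)"
    using r by blast
qed

lemma alg_id:
  fixes ia A Ab G Gb P Q R S :: complex
  shows "ia * (Gb * (G * P + A * A * Q) + Ab * Ab * (G * R + A * A * S)) * (ia * (Ab * A * P))
    - ia * (Ab * (G * P + A * A * Q)) * (ia * (Gb * A * P + Ab * Ab * A * R))
    = ia ^ 2 * (A * Ab) ^ 3 * (S * P - Q * R)"
  by (simp add: algebra_simps power2_eq_square power3_eq_cube)

theorem lemma2p9:
  fixes F F' :: "complex \<Rightarrow> real" and f g :: "complex \<Rightarrow> complex"
    and a :: real and U V :: "complex set"
  assumes "open U" and "open V"
    and "f holomorphic_on U" and "g holomorphic_on U" and "inj_on f U"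
    and "f ` U \<subseteq> V"
    and "a \<noteq> 0"
    and "real_analytic_on F U" and "real_analytic_on F' V"
    and maps: "\<forall>z\<in>U. \<forall>w. Re w = F z \<longrightarrow> Re (complex_of_real a * w + g z) = F' (f z)"
  shows "\<forall>z\<in>U.
     Dz (Dz (Dzb (Dzb (\<lambda>t. complex_of_real (F t))))) z * Dz (Dzb (\<lambda>t. complex_of_real (F t))) z
       - Dz (Dz (Dzb (\<lambda>t. complex_of_real (F t)))) z * Dz (Dzb (Dzb (\<lambda>t. complex_of_real (F t)))) z
     = (1 / complex_of_real (a ^ 2)) * (deriv f z * cnj (deriv f z)) ^ 3 *
       (Dz (Dz (Dzb (Dzb (\<lambda>t. complex_of_real (F' t))))) (f z) * Dz (Dzb (\<lambda>t. complex_of_real (F' t))) (f z)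
        - Dz (Dz (Dzb (\<lambda>t. complex_of_real (F' t)))) (f z) * Dz (Dzb (Dzb (\<lambda>t. complex_of_real (F' t)))) (f z))"
proof -
  note oU = \<open>open U\<close>
  define \<Phi> where "\<Phi> = (\<lambda>t. complex_of_real (F' t))"
  define E where "E = (\<lambda>t. complex_of_real (F t))"
  define K where "K = Dzb \<Phi>"
  define K2 where "K2 = Dzb K"
  define P where "P = Dz K"
  define Q where "Q = Dz P"
  define R where "R = Dz K2"
  define S where "S = Dz R"
  define \<alpha> where "\<alpha> = deriv f"
  define \<gamma> where "\<gamma> = deriv \<alpha>"
  define f3 where "f3 = deriv \<gamma>"
  define g1 where "g1 = deriv g"
  define g2 where "g2 = deriv g1"
  define g3 where "g3 = deriv g2"
  define ia where "ia = inverse (complex_of_real a)"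
  have RPhi: "RAc \<Phi> V" unfolding \<Phi>_def using assms(9) by (rule RA_of_real)
  have RK: "RAc K V" unfolding K_def using RPhi by (rule RA_Dzb)
  have RK2: "RAc K2 V" unfolding K2_def using RK by (rule RA_Dzb)
  have RP: "RAc P V" unfolding P_def using RK by (rule RA_Dz)
  have RR: "RAc R V" unfolding R_def using RK2 by (rule RA_Dz)
  have WPhi: "W \<Phi> y (Dz \<Phi> y) (K y)" if "y \<in> V" for y
    unfolding K_def by (rule diff_W, rule RA_diff[OF RPhi that])
  have WK: "W K y (P y) (K2 y)" if "y \<in> V" for y
    unfolding P_def K2_def by (rule diff_W, rule RA_diff[OF RK that])
  have WK2: "W K2 y (R y) (Dzb K2 y)" if "y \<in> V" for y
    unfolding R_def by (rule diff_W, rule RA_diff[OF RK2 that])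
  have WP: "W P y (Q y) (Dzb P y)" if "y \<in> V" for y
    unfolding Q_def by (rule diff_W, rule RA_diff[OF RP that])
  have WR: "W R y (S y) (Dzb R y)" if "y \<in> V" for y
    unfolding S_def by (rule diff_W, rule RA_diff[OF RR that])
  have hf: "\<alpha> holomorphic_on U" "\<gamma> holomorphic_on U" "g1 holomorphic_on U" "g2 holomorphic_on U"
    unfolding \<alpha>_def \<gamma>_def g1_def g2_def using assms(3,4) oU by (auto intro!: holomorphic_deriv)
  have df: "(f has_field_derivative \<alpha> t) (at t)" "(\<alpha> has_field_derivative \<gamma> t) (at t)"
     "(\<gamma> has_field_derivative f3 t) (at t)"
     "(g has_field_derivative g1 t) (at t)" "(g1 has_field_derivative g2 t) (at t)"
     "(g2 has_field_derivative g3 t) (at t)" if "t \<in> U" for t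
    unfolding \<alpha>_def \<gamma>_def g1_def g2_def f3_def g3_def
    using hf assms(3,4) oU that by (auto simp: \<alpha>_def \<gamma>_def g1_def g2_def intro!: holomorphic_derivI)
  have fV: "f t \<in> V" if "t \<in> U" for t using assms(6) that by blast
  have Eeq: "E t = ia * \<Phi> (f t) - (ia/2) * (g t + cnj (g t))" if "t \<in> U" for t
  proof -
    have "Re (complex_of_real a * complex_of_real (F t) + g t) = F' (f t)"
      using maps that Re_complex_of_real by blast
    then have "a * F t + Re (g t) = F' (f t)" by simp
    then have Ft: "F t = (F' (f t) - Re (g t)) / a" using assms(7) by (simp add: field_simps)
    have Fc: "complex_of_real (F t) = (complex_of_real (F' (f t)) - complex_of_real (Re (g t))) / complex_of_real a"
      unfolding Ft by simp
    have "E t = (\<Phi> (f t) - complex_of_real (Re (g t))) * ia"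
      unfolding E_def \<Phi>_def ia_def Fc by (simp add: divide_inverse)
    also have "\<dots> = ia * \<Phi> (f t) - (ia/2) * (g t + cnj (g t))"
      unfolding complex_add_cnj by (simp add: algebra_simps)
    finally show ?thesis .
  qed
  define e1 where "e1 = (\<lambda>t. ia * (cnj (\<alpha> t) * K (f t)) - (ia/2) * cnj (g1 t))"
  define e2 where "e2 = (\<lambda>t. ia * (cnj (\<gamma> t) * K (f t) + cnj (\<alpha> t) * cnj (\<alpha> t) * K2 (f t)) - (ia/2) * cnj (g2 t))"
  define e3 where "e3 = (\<lambda>t. ia * (cnj (\<alpha> t) * \<alpha> t * P (f t)))"
  define e4 where "e4 = (\<lambda>t. ia * (cnj (\<alpha> t) * (\<gamma> t * P (f t) + \<alpha> t * \<alpha> t * Q (f t))))"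
  define e5 where "e5 = (\<lambda>t. ia * (cnj (\<gamma> t) * \<alpha> t * P (f t) + cnj (\<alpha> t) * cnj (\<alpha> t) * \<alpha> t * R (f t)))"
  define e6 where "e6 = (\<lambda>t. ia * (cnj (\<gamma> t) * (\<gamma> t * P (f t) + \<alpha> t * \<alpha> t * Q (f t))
       + cnj (\<alpha> t) * cnj (\<alpha> t) * (\<gamma> t * R (f t) + \<alpha> t * \<alpha> t * S (f t))))"
  have WE: "\<exists>A. W (\<lambda>t. ia * \<Phi> (f t) - (ia/2) * (g t + cnj (g t))) t A (e1 t)" if "t \<in> U" for t
    by (rule exI, rule W_eqb[OF W_diff[OF W_mult[OF W_const W_comp[OF WPhi[OF fV[OF that]] df(1)[OF that]]]
          W_mult[OF W_const W_add[OF W_holo[OF df(4)[OF that]] W_cnj[OF df(4)[OF that]]]]]])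
       (auto simp: e1_def algebra_simps)
  have We1: "W e1 t (e3 t) (e2 t)" if "t \<in> U" for t
    unfolding e1_def
    by (rule W_eqI[OF W_diff[OF W_mult[OF W_const W_mult[OF W_cnj[OF df(2)[OF that]] W_comp[OF WK[OF fV[OF that]] df(1)[OF that]]]]
          W_mult[OF W_const W_cnj[OF df(5)[OF that]]]]])
       (auto simp: e2_def e3_def algebra_simps)
  have We2: "\<exists>B. W e2 t (e5 t) B" if "t \<in> U" for t
    unfolding e2_def
    by (rule exI, rule W_eqa[OF W_diff[OF W_mult[OF W_const W_add[OF W_mult[OF W_cnj[OF df(3)[OF that]] W_comp[OF WK[OF fV[OF that]] df(1)[OF that]]]
          W_mult[OF W_mult[OF W_cnj[OF df(2)[OF that]] W_cnj[OF df(2)[OF that]]] W_comp[OF WK2[OF fV[OF that]] df(1)[OF that]]]]]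
          W_mult[OF W_const W_cnj[OF df(6)[OF that]]]]])
       (auto simp: e5_def algebra_simps)
  have We3: "\<exists>B. W e3 t (e4 t) B" if "t \<in> U" for t
    unfolding e3_def
    by (rule exI, rule W_eqa[OF W_mult[OF W_const W_mult[OF W_mult[OF W_cnj[OF df(2)[OF that]] W_holo[OF df(2)[OF that]]]
          W_comp[OF WP[OF fV[OF that]] df(1)[OF that]]]]])
       (auto simp: e4_def algebra_simps)
  have We5: "\<exists>B. W e5 t (e6 t) B" if "t \<in> U" for t
    unfolding e5_def
    by (rule exI, rule W_eqa[OF W_mult[OF W_const W_add[OF
          W_mult[OF W_mult[OF W_cnj[OF df(3)[OF that]] W_holo[OF df(2)[OF that]]] W_comp[OF WP[OF fV[OF that]] df(1)[OF that]]]
          W_mult[OF W_mult[OF W_mult[OF W_cnj[OF df(2)[OF that]] W_cnj[OF df(2)[OF that]]] W_holo[OF df(2)[OF that]]] W_comp[OF WR[OF fV[OF that]] df(1)[OF that]]]]]])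
       (auto simp: e6_def algebra_simps)
  have D1: "Dzb E t = e1 t" if tU: "t \<in> U" for t
  proof -
    obtain A where w: "W (\<lambda>t. ia * \<Phi> (f t) - (ia/2) * (g t + cnj (g t))) t A (e1 t)" using WE[OF tU] by blast
    show ?thesis by (rule trans[OF local_D(2)[OF oU Eeq tU] W_Dz(2)[OF w]])
  qed
  have D2: "Dzb (Dzb E) t = e2 t" "Dz (Dzb E) t = e3 t" if tU: "t \<in> U" for t
  proof -
    show "Dzb (Dzb E) t = e2 t" by (rule trans[OF local_D(2)[OF oU D1 tU] W_Dz(2)[OF We1[OF tU]]])
    show "Dz (Dzb E) t = e3 t" by (rule trans[OF local_D(1)[OF oU D1 tU] W_Dz(1)[OF We1[OF tU]]])
  qed
  have D3: "Dz (Dzb (Dzb E)) t = e5 t" "Dz (Dz (Dzb E)) t = e4 t" if tU: "t \<in> U" for t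
  proof -
    obtain B2 where w2: "W e2 t (e5 t) B2" using We2[OF tU] by blast
    obtain B3 where w3: "W e3 t (e4 t) B3" using We3[OF tU] by blast
    show "Dz (Dzb (Dzb E)) t = e5 t" by (rule trans[OF local_D(1)[OF oU D2(1) tU] W_Dz(1)[OF w2]])
    show "Dz (Dz (Dzb E)) t = e4 t" by (rule trans[OF local_D(1)[OF oU D2(2) tU] W_Dz(1)[OF w3]])
  qed
  have D4: "Dz (Dz (Dzb (Dzb E))) t = e6 t" if tU: "t \<in> U" for t
  proof -
    obtain B5 where w5: "W e5 t (e6 t) B5" using We5[OF tU] by blast
    show ?thesis by (rule trans[OF local_D(1)[OF oU D3(1) tU] W_Dz(1)[OF w5]])
  qed
  show ?thesis
  proof
    fix z assume z: "z \<in> U"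
    have "e6 z * e3 z - e4 z * e5 z = (1 / complex_of_real (a ^ 2)) * (\<alpha> z * cnj (\<alpha> z)) ^ 3 *
       (S (f z) * P (f z) - Q (f z) * R (f z))"
    proof -
      have ia2: "1 / complex_of_real (a ^ 2) = ia ^ 2" unfolding ia_def by (simp add: power_inverse divide_inverse)
      show ?thesis unfolding e3_def e4_def e5_def e6_def ia2 by (rule alg_id)
    qed
    then show "Dz (Dz (Dzb (Dzb (\<lambda>t. complex_of_real (F t))))) z * Dz (Dzb (\<lambda>t. complex_of_real (F t))) z
       - Dz (Dz (Dzb (\<lambda>t. complex_of_real (F t)))) z * Dz (Dzb (Dzb (\<lambda>t. complex_of_real (F t)))) z
     = (1 / complex_of_real (a ^ 2)) * (deriv f z * cnj (deriv f z)) ^ 3 *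
       (Dz (Dz (Dzb (Dzb (\<lambda>t. complex_of_real (F' t))))) (f z) * Dz (Dzb (\<lambda>t. complex_of_real (F' t))) (f z)
        - Dz (Dz (Dzb (\<lambda>t. complex_of_real (F' t)))) (f z) * Dz (Dzb (Dzb (\<lambda>t. complex_of_real (F' t)))) (f z))"
      using D2(2)[OF z] D3[OF z] D4[OF z]
      unfolding E_def[symmetric] \<Phi>_def[symmetric] K_def[symmetric] K2_def[symmetric] P_def[symmetric]
        Q_def[symmetric] R_def[symmetric] S_def[symmetric] \<alpha>_def[symmetric]
      by simp
  qed
qed

end
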